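(* For $x\in[0,2^{10})$ write $\lfloor x\rfloor=\sum_{k=0}^{9}2^{9-k}e_k$ with $e_k\in\{0,1\}$ and $x=\lfloor x\rfloor+\sum_{k=0}^{\infty}s^k10^{-k-1}$ with $s^k\in\{0,\dots,9\}$, using the decimal expansion without an infinite tail of $9$'s. Define $g:[0,2^{10})\to[0,2^{10})$ by $$g(x)=\sum_{k=0}^{9}2^{9-k}\big(e_k+\delta(k,s^0)\bmod 2\big)+\sum_{k=0}^{\infty}s^{k+1}10^{-k-1},$$ where $\delta(k,j)=1$ if $k=j$ and $0$ otherwise. Let $I=\{n/10 : n\in\{0,1,\dots,2^{10}\cdot10\}\}$ and, for $x^0\in[0,2^{10})$, let $x^{n+1}=g(x^n)$ for $n\ge 0$. Let $\mathcal{L}=\{x^0\in[0,2^{10}) : x^n\notin I \text{ for all } n\in\mathbb{N}\}$. Then for every $x^0\in\mathcal{L}$, the Lyapunov exponent $$\lambda(x^0)=\lim_{n\to+\infty}\frac{1}{n}\sum_{i=1}^{n}\ln\left|g'(x^{i-1})\right|$$ exists and equals $\ln(10)$. *)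

theory Defs
  imports "HOL-Analysis.Analysis"
begin

definition bin_digit :: "real \<Rightarrow> nat \<Rightarrow> nat" where
  "bin_digit x k = (nat \<lfloor>x\<rfloor> div 2 ^ (9 - k)) mod 2"

text \<open>Decimal digits of the fractional part, the expansion without an infinite tail of 9s:
  x = floor x + sum_k s^k 10^(-k-1).\<close>
definition dec_digit :: "real \<Rightarrow> nat \<Rightarrow> nat" where
  "dec_digit x k = nat (\<lfloor>10 ^ (k + 1) * frac x\<rfloor> mod 10)"

definition delta :: "nat \<Rightarrow> nat \<Rightarrow> nat" where
  "delta k j = (if k = j then 1 else 0)"

definition gmap :: "real \<Rightarrow> real" where
  "gmap x = (\<Sum>k\<le>9. 2 ^ (9 - k) * real ((bin_digit x k + delta k (dec_digit x 0)) mod 2))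
            + (\<Sum>k. real (dec_digit x (k + 1)) * 10 powi (- int k - 1))"

definition Iset :: "real set" where
  "Iset = {real n / 10 | n. n \<le> 2 ^ 10 * 10}"

definition Lset :: "real set" where
  "Lset = {x0 \<in> {0..<2 ^ 10}. \<forall>n. (gmap ^^ n) x0 \<notin> Iset}"

end

theory Submission
  imports Defs
begin

lemma floor10_mod: "\<lfloor>10 * (a::real)\<rfloor> mod 10 = \<lfloor>10 * a\<rfloor> - 10 * \<lfloor>a\<rfloor>"
proof -
  define r where "r = \<lfloor>10 * a\<rfloor> - 10 * \<lfloor>a\<rfloor>"
  have a1: "of_int \<lfloor>a\<rfloor> \<le> a" "a < of_int \<lfloor>a\<rfloor> + 1" by linarith+
  have a2: "of_int \<lfloor>10*a\<rfloor> \<le> 10*a" "10*a < of_int \<lfloor>10*a\<rfloor> + 1" by linarith+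
  have "real_of_int (10 * \<lfloor>a\<rfloor>) < of_int \<lfloor>10 * a\<rfloor> + 1" using a1 a2 by linarith
  hence "10 * \<lfloor>a\<rfloor> < \<lfloor>10 * a\<rfloor> + 1" by linarith
  hence "0 \<le> r" unfolding r_def by simp
  moreover have "real_of_int \<lfloor>10 * a\<rfloor> < of_int (10 * \<lfloor>a\<rfloor> + 10)" using a1 a2 by linarith
  hence "r < 10" unfolding r_def by linarith
  moreover have "\<lfloor>10 * a\<rfloor> = r + 10 * \<lfloor>a\<rfloor>" unfolding r_def by simp
  ultimately show ?thesis by simp
qed

lemma floor_div10: "\<lfloor>y::real\<rfloor> = \<lfloor>10 * y\<rfloor> div 10"
proof -
  define m where "m = \<lfloor>10 * y\<rfloor>"
  define q where "q = \<lfloor>y\<rfloor>"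
  have a1: "of_int q \<le> y" "y < of_int q + 1" unfolding q_def by linarith+
  have a2: "of_int m \<le> 10*y" "10*y < of_int m + 1" unfolding m_def by linarith+
  have "real_of_int (10 * q) < of_int m + 1" using a1 a2 by linarith
  hence "10 * q \<le> m" by linarith
  moreover have "real_of_int m < of_int (10 * q + 10)" using a1 a2 by linarith
  hence "m < 10 * q + 10" by linarith
  ultimately have "m div 10 = q"
    by presburger
  thus ?thesis unfolding m_def q_def by simp
qed

lemma digits_sum:
  fixes y :: real
  shows "(\<lambda>k. real (dec_digit y (k + 1)) * 10 powi (- int k - 1)) sums (10 * y - \<lfloor>10 * y\<rfloor>)"
proof -
  define t where "t = frac y"
  define f where "f k = \<lfloor>10 ^ (k + 1) * t\<rfloor>" for k :: nat
  have t0: "0 \<le> t" unfolding t_def by (simp add: frac_ge_0)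
  have tm: "real (dec_digit y (k + 1)) * 10 powi (- int k - 1)
      = of_int (f (k+1)) / 10 ^ (k+1) - of_int (f k) / 10 ^ k" for k
  proof -
    have e: "(10::real) ^ (k + 1 + 1) * t = 10 * (10 ^ (k+1) * t)" by simp
    have "\<lfloor>10 ^ (k + 1 + 1) * t\<rfloor> mod 10 = f (k+1) - 10 * f k"
      unfolding f_def e by (rule floor10_mod)
    moreover have "f (k+1) - 10 * f k \<ge> 0"
      using floor10_mod[of "10 ^ (k+1) * t"] e unfolding f_def
      by (metis Suc_eq_plus1 pos_mod_sign zero_less_numeral)
    ultimately have d: "real (dec_digit y (k + 1)) = of_int (f (k+1) - 10 * f k)"
      unfolding dec_digit_def t_def by simp
    have p: "(10::real) powi (- int k - 1) = 1 / 10 ^ (k+1)"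
    proof -
      have "- int k - 1 = - int (k+1)" by simp
      hence "(10::real) powi (- int k - 1) = inverse (10 powi int (k+1))"
        by (simp only: power_int_minus)
      also have "\<dots> = 1 / 10 ^ (k+1)" by (simp only: power_int_of_nat inverse_eq_divide)
      finally show ?thesis .
    qed
    show ?thesis unfolding d p by (simp add: field_simps)
  qed
  have ps: "(\<Sum>k<n. real (dec_digit y (k + 1)) * 10 powi (- int k - 1))
       = of_int (f n) / 10 ^ n - of_int (f 0)" for n
    unfolding tm by (induction n) auto
  have lim: "(\<lambda>n. of_int (f n) / 10 ^ n) \<longlonglongrightarrow> 10 * t"
  proof (rule tendsto_sandwich[of "\<lambda>n. 10 * t - 1 / 10 ^ n" _ _ "\<lambda>n. 10 * t"])
    show "\<forall>\<^sub>F n in sequentially. 10 * t - 1 / 10 ^ n \<le> of_int (f n) / 10 ^ n"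
    proof (intro always_eventually allI)
      fix n
      have "10 ^ (n+1) * t - 1 \<le> of_int (f n)" unfolding f_def by linarith
      hence "(10 ^ (n+1) * t - 1) / 10 ^ n \<le> of_int (f n) / 10 ^ n"
        by (simp add: divide_right_mono)
      thus "10 * t - 1 / 10 ^ n \<le> of_int (f n) / 10 ^ n" by (simp add: field_simps)
    qed
    show "\<forall>\<^sub>F n in sequentially. of_int (f n) / 10 ^ n \<le> 10 * t"
    proof (intro always_eventually allI)
      fix n
      have "of_int (f n) \<le> 10 ^ (n+1) * t" unfolding f_def by linarith
      thus "of_int (f n) / 10 ^ n \<le> 10 * t" by (simp add: pos_divide_le_eq algebra_simps)
    qed
    show "(\<lambda>n. 10 * t) \<longlonglongrightarrow> 10 * t" by simp
    have "(\<lambda>n. (1::real) / 10 ^ n) \<longlonglongrightarrow> 0"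
      by (intro LIMSEQ_divide_realpow_zero) auto
    hence "(\<lambda>n. 10 * t - 1 / 10 ^ n) \<longlonglongrightarrow> 10 * t - 0"
      by (intro tendsto_diff) auto
    thus "(\<lambda>n. 10 * t - 1 / 10 ^ n) \<longlonglongrightarrow> 10 * t" by simp
  qed
  hence "(\<lambda>n. \<Sum>k<n. real (dec_digit y (k + 1)) * 10 powi (- int k - 1)) \<longlonglongrightarrow> 10 * t - of_int (f 0)"
    unfolding ps by (intro tendsto_diff) auto
  moreover have "10 * t - of_int (f 0) = 10 * y - \<lfloor>10 * y\<rfloor>"
  proof -
    have "10 * t = 10 * y - of_int (10 * \<lfloor>y\<rfloor>)" unfolding t_def frac_def by simp
    have "f 0 = \<lfloor>10 * t\<rfloor>" unfolding f_def by simp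
    also have "\<dots> = \<lfloor>10 * y - of_int (10 * \<lfloor>y\<rfloor>)\<rfloor>" using \<open>10 * t = _\<close> by simp
    also have "\<dots> = \<lfloor>10 * y\<rfloor> - 10 * \<lfloor>y\<rfloor>" by (rule floor_diff_of_int)
    finally have "f 0 = \<lfloor>10 * y\<rfloor> - 10 * \<lfloor>y\<rfloor>" .
    thus ?thesis unfolding t_def frac_def by simp
  qed
  ultimately show ?thesis unfolding sums_def by simp
qed


definition Qf :: "int \<Rightarrow> real" where
  "Qf m = (\<Sum>k\<le>9. 2 ^ (9 - k) * real ((nat (m div 10) div 2 ^ (9 - k) mod 2 + delta k (nat (m mod 10))) mod 2))"

lemma floor_10frac: "\<lfloor>10 * frac (y::real)\<rfloor> = \<lfloor>10 * y\<rfloor> - 10 * \<lfloor>y\<rfloor>"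
proof -
  have "10 * frac y = 10 * y - of_int (10 * \<lfloor>y\<rfloor>)" unfolding frac_def by simp
  hence "\<lfloor>10 * frac y\<rfloor> = \<lfloor>10 * y - of_int (10 * \<lfloor>y\<rfloor>)\<rfloor>" by simp
  also have "\<dots> = \<lfloor>10 * y\<rfloor> - 10 * \<lfloor>y\<rfloor>" by (rule floor_diff_of_int)
  finally show ?thesis .
qed

lemma gmap_formula: "gmap y = Qf \<lfloor>10 * y\<rfloor> + (10 * y - \<lfloor>10 * y\<rfloor>)"
proof -
  have b: "bin_digit y k = nat (\<lfloor>10 * y\<rfloor> div 10) div 2 ^ (9 - k) mod 2" for k
    unfolding bin_digit_def using floor_div10[of y] by simp
  have d: "dec_digit y 0 = nat (\<lfloor>10 * y\<rfloor> mod 10)"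
  proof -
    have "(\<lfloor>10*y\<rfloor> - 10*\<lfloor>y\<rfloor>) mod 10 = \<lfloor>10*y\<rfloor> mod 10" by presburger
    thus ?thesis unfolding dec_digit_def using floor_10frac[of y] by simp
  qed
  have s: "(\<Sum>k. real (dec_digit y (k + 1)) * 10 powi (- int k - 1)) = 10 * y - \<lfloor>10 * y\<rfloor>"
    using digits_sum[of y] by (rule sums_unique[symmetric])
  show ?thesis unfolding gmap_def s Qf_def b d by simp
qed

lemma Qf_bounds: "0 \<le> Qf m" "Qf m \<le> 1023"
proof -
  show "0 \<le> Qf m" unfolding Qf_def by (intro sum_nonneg) simp
  have "Qf m \<le> (\<Sum>k\<le>9. 2 ^ (9 - k) * (1::real))" unfolding Qf_def
    by (intro sum_mono mult_left_mono) auto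
  also have "\<dots> = 1023" by (simp add: numeral_eq_Suc atMost_Suc)
  finally show "Qf m \<le> 1023" .
qed

lemma gmap_range: "gmap y \<in> {0..<2^10}"
  using Qf_bounds[of "\<lfloor>10 * y\<rfloor>"] unfolding gmap_formula
  by (auto, linarith+)

lemma gmap_deriv:
  assumes "\<And>m::int. 10 * x \<noteq> of_int m"
  shows "(gmap has_field_derivative 10) (at x)"
proof -
  define m where "m = \<lfloor>10 * x\<rfloor>"
  define S where "S = {of_int m / 10 <..< (of_int m + 1) / (10::real)}"
  have xS: "x \<in> S" unfolding S_def m_def using assms[of "\<lfloor>10 * x\<rfloor>"]
    by (auto simp: field_simps) linarith+
  have eq: "Qf m + (10 * y - m) = gmap y" if "y \<in> S" for y
  proof -
    have "\<lfloor>10 * y\<rfloor> = m" using that unfolding S_def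
      by (intro floor_unique) (auto simp: field_simps)
    thus ?thesis unfolding gmap_formula by simp
  qed
  have "((\<lambda>y. Qf m + (10 * y - m)) has_field_derivative 10) (at x)"
    by (auto intro!: derivative_eq_intros)
  thus ?thesis
    by (rule has_field_derivative_transform_within_open[OF _ _ xS]) (auto simp: S_def eq)
qed

lemma not_I_int:
  assumes "x \<in> {0..<2^10}" "x \<notin> Iset"
  shows "10 * x \<noteq> of_int m"
proof
  assume h: "10 * x = of_int m"
  have "0 \<le> m" "m \<le> 10240" using assms(1) h by auto
  hence "x = real (nat m) / 10" "nat m \<le> 2 ^ 10 * 10" using h by auto
  thus False using assms(2) unfolding Iset_def by blast
qed

theorem mainTheorem3:
  assumes "x0 \<in> Lset"
  shows "(\<forall>n. gmap differentiable (at ((gmap ^^ n) x0))) \<and>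
         (\<lambda>n. (1 / real n) * (\<Sum>i=1..n. ln \<bar>deriv gmap ((gmap ^^ (i - 1)) x0)\<bar>))
            \<longlonglongrightarrow> ln 10"
proof -
  have rng: "(gmap ^^ n) x0 \<in> {0..<2^10}" for n
    using assms gmap_range unfolding Lset_def by (cases n) auto
  have D: "(gmap has_field_derivative 10) (at ((gmap ^^ n) x0))" for n
    using assms rng[of n] not_I_int unfolding Lset_def
    by (intro gmap_deriv) blast
  have dv: "deriv gmap ((gmap ^^ n) x0) = 10" for n using D by (rule DERIV_imp_deriv)
  have 1: "\<forall>n. gmap differentiable (at ((gmap ^^ n) x0))"
  proof
    fix n show "gmap differentiable (at ((gmap ^^ n) x0))"
      using D[of n] unfolding differentiable_def has_field_derivative_def by blast
  qed
  have ev: "\<forall>\<^sub>F n in sequentially. ln 10 = (1 / real n) * (\<Sum>i=1..n. ln \<bar>deriv gmap ((gmap ^^ (i - 1)) x0)\<bar>)"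
    using eventually_ge_at_top[of "1::nat"]
  proof eventually_elim
    case (elim n)
    have "(\<Sum>i=1..n. ln \<bar>deriv gmap ((gmap ^^ (i - 1)) x0)\<bar>) = (\<Sum>i=1..n. ln 10)"
      by (intro sum.cong) (simp_all add: dv)
    also have "\<dots> = real n * ln 10" by simp
    finally show ?case using elim by simp
  qed
  have 2: "(\<lambda>n. (1 / real n) * (\<Sum>i=1..n. ln \<bar>deriv gmap ((gmap ^^ (i - 1)) x0)\<bar>)) \<longlonglongrightarrow> ln 10"
    by (rule Lim_transform_eventually[OF tendsto_const ev])
  show ?thesis using 1 2 by blast
qed

end
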